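(* Let $k\ge 2$ be a constant integer. Any algorithm that, for every $n$-variable $(k,1,0)$-CNF formula $\Phi$, exactly learns $\Phi$ from i.i.d. uniform random solutions of $\Phi$ with probability at least $\frac13$ requires $\Omega_k(\log n)$ samples.
   Context: A $(k,d,s)$-CNF formula on variable set $V$ is a CNF formula in which every clause contains exactly $k$ distinct variables, every variable appears in at most $d$ clauses, and any two distinct clauses share at most $s$ variables (so a $(k,1,0)$-CNF formula has pairwise disjoint clauses). $\mu_\Phi$ denotes the uniform distribution over satisfying assignments of $\Phi$. Exactly learning $\Phi$ means outputting, from i.i.d. samples of $\mu_\Phi$, a CNF formula $\widehat\Phi$ with $\mu_{\widehat\Phi}=\mu_\Phi$ (the same set of satisfying assignments). *)

theory Defs
  imports "HOL-Probability.Probability"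
begin

text \<open>A literal is a pair (variable, polarity); a clause is a set of literals; a CNF formula
  is a set of clauses. An assignment on {0..<n} is represented by the set of variables
  that are set to True (a subset of {0..<n}).\<close>

type_synonym literal = "nat \<times> bool"
type_synonym clause = "literal set"
type_synonym cnf = "clause set"
type_synonym assignment = "nat set"

definition clause_vars :: "clause \<Rightarrow> nat set" where
  "clause_vars C = fst ` C"

definition lit_true :: "assignment \<Rightarrow> literal \<Rightarrow> bool" where
  "lit_true x l = ((fst l \<in> x) = snd l)"

definition satisfies :: "assignment \<Rightarrow> cnf \<Rightarrow> bool" where
  "satisfies x \<Phi> = (\<forall>C\<in>\<Phi>. \<exists>l\<in>C. lit_true x l)"

definition sols :: "nat \<Rightarrow> cnf \<Rightarrow> assignment set" where
  "sols n \<Phi> = {x. x \<subseteq> {..<n} \<and> satisfies x \<Phi>}"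

definition kds_cnf :: "nat \<Rightarrow> nat \<Rightarrow> nat \<Rightarrow> nat \<Rightarrow> cnf \<Rightarrow> bool" where
  "kds_cnf n k d s \<Phi> \<longleftrightarrow>
     finite \<Phi> \<and>
     (\<forall>C\<in>\<Phi>. finite C \<and> inj_on fst C \<and> card (clause_vars C) = k \<and> clause_vars C \<subseteq> {..<n}) \<and>
     (\<forall>v<n. card {C\<in>\<Phi>. v \<in> clause_vars C} \<le> d) \<and>
     (\<forall>C\<in>\<Phi>. \<forall>D\<in>\<Phi>. C \<noteq> D \<longrightarrow> card (clause_vars C \<inter> clause_vars D) \<le> s)"

definition mu :: "nat \<Rightarrow> cnf \<Rightarrow> assignment pmf" where
  "mu n \<Phi> = pmf_of_set (sols n \<Phi>)"

fun iid_samples :: "nat \<Rightarrow> 'a pmf \<Rightarrow> 'a list pmf" where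
  "iid_samples 0 p = return_pmf []"
| "iid_samples (Suc m) p = bind_pmf p (\<lambda>x. bind_pmf (iid_samples m p) (\<lambda>xs. return_pmf (x # xs)))"

definition success_prob :: "(nat \<Rightarrow> assignment list \<Rightarrow> cnf pmf) \<Rightarrow> nat \<Rightarrow> nat \<Rightarrow> cnf \<Rightarrow> real" where
  "success_prob A n m \<Phi> =
     measure_pmf.prob (bind_pmf (iid_samples m (mu n \<Phi>)) (A n)) {\<Psi>. sols n \<Psi> = sols n \<Phi>}"

end

theory Submission
  imports Defs
begin

lemma pmf_nn_le:
  fixes p p' :: "'a pmf" and r :: real
  assumes r: "r \<ge> 0" and le: "\<And>x. pmf p x \<le> r * pmf p' x"
  shows "(\<integral>\<^sup>+x. g x \<partial>measure_pmf p) \<le> ennreal r * (\<integral>\<^sup>+x. g x \<partial>measure_pmf p')"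
proof -
  have "(\<integral>\<^sup>+x. g x \<partial>measure_pmf p) = \<integral>\<^sup>+ x. ennreal (pmf p x) * g x \<partial>count_space UNIV"
    by (rule nn_integral_measure_pmf)
  also have "\<dots> \<le> \<integral>\<^sup>+ x. ennreal r * (ennreal (pmf p' x) * g x) \<partial>count_space UNIV"
  proof (rule nn_integral_mono)
    fix x
    have "ennreal (pmf p x) \<le> ennreal r * ennreal (pmf p' x)"
      using le[of x] r by (simp add: ennreal_mult[symmetric])
    then show "ennreal (pmf p x) * g x \<le> ennreal r * (ennreal (pmf p' x) * g x)"
      by (metis mult.assoc mult_right_mono zero_le)
  qed
  also have "\<dots> = ennreal r * \<integral>\<^sup>+ x. ennreal (pmf p' x) * g x \<partial>count_space UNIV"
    by (rule nn_integral_cmult) simp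
  also have "\<dots> = ennreal r * (\<integral>\<^sup>+x. g x \<partial>measure_pmf p')"
    by (simp add: nn_integral_measure_pmf)
  finally show ?thesis .
qed

lemma iid_nn_le:
  fixes p p' :: "'a pmf" and r :: real
  assumes r: "r \<ge> 0" and le: "\<And>x. pmf p x \<le> r * pmf p' x"
  shows "(\<integral>\<^sup>+xs. f xs \<partial>measure_pmf (iid_samples m p)) \<le> ennreal (r^m) * (\<integral>\<^sup>+xs. f xs \<partial>measure_pmf (iid_samples m p'))"
proof (induction m arbitrary: f)
  case 0
  then show ?case by simp
next
  case (Suc m)
  have "(\<integral>\<^sup>+xs. f xs \<partial>measure_pmf (iid_samples (Suc m) p)) = (\<integral>\<^sup>+x. (\<integral>\<^sup>+xs. f (x#xs) \<partial>measure_pmf (iid_samples m p)) \<partial>measure_pmf p)"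
    by simp
  also have "\<dots> \<le> (\<integral>\<^sup>+x. ennreal (r^m) * (\<integral>\<^sup>+xs. f (x#xs) \<partial>measure_pmf (iid_samples m p')) \<partial>measure_pmf p)"
    by (rule nn_integral_mono) (rule Suc.IH)
  also have "\<dots> = ennreal (r^m) * (\<integral>\<^sup>+x. (\<integral>\<^sup>+xs. f (x#xs) \<partial>measure_pmf (iid_samples m p')) \<partial>measure_pmf p)"
    by (rule nn_integral_cmult) simp
  also have "\<dots> \<le> ennreal (r^m) * (ennreal r * (\<integral>\<^sup>+x. (\<integral>\<^sup>+xs. f (x#xs) \<partial>measure_pmf (iid_samples m p')) \<partial>measure_pmf p'))"
    by (rule mult_left_mono[OF pmf_nn_le[OF r le]]) simp
  also have "\<dots> = ennreal (r^Suc m) * (\<integral>\<^sup>+xs. f xs \<partial>measure_pmf (iid_samples (Suc m) p'))"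
    using r by (simp add: ennreal_mult' mult.left_commute mult.assoc)
  finally show ?case .
qed

definition blk :: "nat \<Rightarrow> nat \<Rightarrow> nat set" where "blk k j = {j*k..<j*k+k}"
definition cl :: "nat \<Rightarrow> nat \<Rightarrow> clause" where "cl k j = (\<lambda>v. (v,True)) ` blk k j"
definition phi :: "nat \<Rightarrow> nat \<Rightarrow> cnf" where "phi k j = {cl k j}"

lemma vars_cl: "clause_vars (cl k j) = blk k j"
  unfolding clause_vars_def cl_def by (auto simp: image_image)

lemma blk_sub: assumes "j < n div k" shows "blk k j \<subseteq> {..<n}"
proof -
  have "j*k + k \<le> n div k * k" using assms by (metis Suc_leI mult_Suc mult_le_mono1 add.commute)
  also have "\<dots> \<le> n" by simp
  finally show ?thesis unfolding blk_def by auto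
qed

lemma kds_phi: assumes "j < n div k" shows "kds_cnf n k 1 0 (phi k j)"
  unfolding kds_cnf_def phi_def using blk_sub[OF assms]
  by (auto simp: vars_cl card_le_Suc0_iff_eq) (auto simp: blk_def cl_def inj_on_def)

lemma sols_phi: "sols n (phi k j) = {x. x \<subseteq> {..<n} \<and> x \<inter> blk k j \<noteq> {}}"
  unfolding sols_def phi_def satisfies_def cl_def lit_true_def by auto

lemma sols_phi_ne: assumes "j < n div k" "j' \<noteq> j" "k \<ge> 1"
  shows "sols n (phi k j) \<noteq> sols n (phi k j')"
proof -
  have "j*k \<in> blk k j" using assms(3) by (simp add: blk_def)
  then have "blk k j \<in> sols n (phi k j)" using blk_sub[OF assms(1)]
    by (auto simp: sols_phi)
  moreover have "blk k j \<inter> blk k j' = {}"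
  proof (cases "j < j'")
    case True
    then have "j*k + k \<le> j'*k" by (metis Suc_leI mult_Suc mult_le_mono1 add.commute)
    then show ?thesis by (auto simp: blk_def)
  next
    case False
    then have "j'*k + k \<le> j*k" using assms(2) by (metis Suc_leI mult_Suc mult_le_mono1 add.commute linorder_neqE_nat)
    then show ?thesis by (auto simp: blk_def)
  qed
  then have "blk k j \<notin> sols n (phi k j')" by (auto simp: sols_phi)
  ultimately show ?thesis by blast
qed

lemma card_sols_phi: assumes "j < n div k" "k \<ge> 1"
  shows "2^n \<le> 2 * card (sols n (phi k j))"
proof -
  define v where "v = j*k"
  have v1: "v \<in> blk k j" using assms(2) by (simp add: blk_def v_def)
  then have v: "v \<in> blk k j" "v < n" using blk_sub[OF assms(1)] by auto
  have fin: "finite (sols n (phi k j))" by (rule finite_subset[of _ "Pow {..<n}"]) (auto simp: sols_phi)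
  have "inj_on (insert v) (Pow ({..<n} - {v}))" unfolding inj_on_def by blast
  moreover have "insert v ` Pow ({..<n} - {v}) \<subseteq> sols n (phi k j)" using v by (auto simp: sols_phi)
  ultimately have "card (Pow ({..<n} - {v})) \<le> card (sols n (phi k j))"
    using card_inj_on_le fin by blast
  moreover have "card (Pow ({..<n} - {v})) = 2^(n-1)" using v by (simp add: card_Pow)
  moreover have "(2::nat)^n = 2 * 2^(n-1)" using v by (metis Suc_pred' not_less0 gr0I power_Suc)
  ultimately show ?thesis by linarith
qed

lemma pmf_mu_le: assumes "j < n div k" "k \<ge> 1"
  shows "pmf (mu n (phi k j)) x \<le> 2 * pmf (pmf_of_set (Pow {..<n})) x"
proof -
  have fin: "finite (sols n (phi k j))" by (rule finite_subset[of _ "Pow {..<n}"]) (auto simp: sols_phi)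
  have c: "2^n \<le> 2 * card (sols n (phi k j))" by (rule card_sols_phi[OF assms])
  then have ne: "sols n (phi k j) \<noteq> {}" by (metis fin card_0_eq mult_0_right power_eq_0_iff zero_neq_numeral le_zero_eq)
  have sub: "sols n (phi k j) \<subseteq> Pow {..<n}" by (auto simp: sols_phi)
  show ?thesis
  proof (cases "x \<in> sols n (phi k j)")
    case True
    then have "x \<in> Pow {..<n}" using sub by blast
    moreover have "1 / real (card (sols n (phi k j))) \<le> 2 / 2^n"
      using c ne fin by (simp add: field_simps card_gt_0_iff) (metis of_nat_le_iff of_nat_mult of_nat_numeral of_nat_power)
    moreover have "pmf (pmf_of_set (Pow {..<n})) x = 1/2^n" using \<open>x \<in> Pow {..<n}\<close>
      by (subst pmf_of_set) (auto simp: card_Pow)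
    ultimately show ?thesis using True ne fin by (simp add: mu_def)
  next
    case False
    then show ?thesis using ne fin by (simp add: mu_def)
  qed
qed

lemma arith_part:
  fixes k n m :: nat
  assumes k: "k \<ge> 1" and n: "n \<ge> 36*k^2" and h: "real (n div k) / 3 \<le> 2^m"
  shows "real m \<ge> 1/(2*ln 2) * ln (real n)"
proof -
  have kr: "real k \<ge> 1" using k by simp
  have nk: "n < (n div k + 1) * k" using k
    by (metis add.commute div_mult_mod_eq distrib_right mod_less_divisor mult_1 add_less_cancel_left less_le_trans order_refl nat_less_le not_one_le_zero gr0I)
  then have "real n < (real (n div k) + 1) * real k" by (metis of_nat_1 of_nat_add of_nat_less_iff of_nat_mult)
  then have a: "real n / real k - 1 < real (n div k)" using kr by (simp add: field_simps)
  have nr: "real n \<ge> 36 * real k ^ 2" using n by (metis of_nat_le_iff of_nat_mult of_nat_numeral of_nat_power)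
  then have "real n / real k \<ge> 36 * real k" using kr by (simp add: field_simps power2_eq_square)
  have kk: "real k \<le> real k * real k" using kr by (simp add: mult_le_cancel_left1)
  have "real k ^ 2 = real k * real k" by (rule power2_eq_square)
  then have "real k * 2 \<le> real n" using nr kk kr by linarith
  then have b: "real n / real k - 1 \<ge> real n / (2 * real k)" using kr by (simp add: field_simps)
  have npos: "real n > 0" using nr kr by (smt (verit) one_le_power)
  have c: "real n / (6 * real k) \<le> 2^m" using a b h by (simp add: field_simps)
  have pos: "real n / (6 * real k) > 0" using npos kr by simp
  have "ln (real n / (6 * real k)) \<le> ln (2^m)" using c pos by simp
  also have "\<dots> = real m * ln 2" by (simp add: ln_realpow)
  finally have d: "ln (real n) - ln (6 * real k) \<le> real m * ln 2" using npos kr by (simp add: ln_div)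
  have "(6 * real k)^2 \<le> real n" using nr by (simp add: power2_eq_square)
  moreover have "(6 * real k)^2 > 0" using kr by simp
  ultimately have "ln ((6 * real k)^2) \<le> ln (real n)" by (rule ln_mono)
  moreover have "ln ((6 * real k)^2) = 2 * ln (6 * real k)" using kr by (subst ln_realpow) auto
  ultimately have e: "2 * ln (6 * real k) \<le> ln (real n)" by linarith
  have "ln (real n) \<le> 2 * (real m * ln 2)" using d e by linarith
  then show ?thesis by (simp add: field_simps)
qed

theorem theorem1p6:
  fixes k :: nat
  assumes "k \<ge> 2"
  shows "\<exists>c>0. \<exists>N. \<forall>n\<ge>N. \<forall>m. \<forall>A :: nat \<Rightarrow> assignment list \<Rightarrow> cnf pmf.
           (\<forall>\<Phi>. kds_cnf n k 1 0 \<Phi> \<longrightarrow> success_prob A n m \<Phi> \<ge> 1/3)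
           \<longrightarrow> real m \<ge> c * ln (real n)"
proof -
  have k1: "k \<ge> 1" using assms by simp
  show ?thesis
  proof (intro exI[of _ "1/(2*ln 2)"] conjI exI[of _ "36*k^2"] allI impI)
    show "(0::real) < 1/(2*ln 2)" by simp
    fix n m and A :: "nat \<Rightarrow> assignment list \<Rightarrow> cnf pmf"
    assume n: "36*k^2 \<le> n" and H: "\<forall>\<Phi>. kds_cnf n k 1 0 \<Phi> \<longrightarrow> success_prob A n m \<Phi> \<ge> 1/3"
    define L where "L = n div k"
    define U where "U = pmf_of_set (Pow {..<n::nat})"
    define E where "E j = {\<Psi>. sols n \<Psi> = sols n (phi k j)}" for j
    have step: "ennreal (1/3) \<le> ennreal (2^m) * (\<integral>\<^sup>+xs. emeasure (A n xs) (E j) \<partial>measure_pmf (iid_samples m U))"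
      if j: "j < L" for j
    proof -
      have "1/3 \<le> success_prob A n m (phi k j)" using H kds_phi j unfolding L_def by blast
      then have "ennreal (1/3) \<le> ennreal (success_prob A n m (phi k j))" by (rule ennreal_leI)
      also have "\<dots> = emeasure (bind_pmf (iid_samples m (mu n (phi k j))) (A n)) (E j)"
        by (simp add: success_prob_def E_def measure_pmf.emeasure_eq_measure)
      also have "\<dots> = (\<integral>\<^sup>+xs. emeasure (A n xs) (E j) \<partial>measure_pmf (iid_samples m (mu n (phi k j))))"
        by simp
      also have "\<dots> \<le> ennreal (2^m) * (\<integral>\<^sup>+xs. emeasure (A n xs) (E j) \<partial>measure_pmf (iid_samples m U))"
        using iid_nn_le[where r=2 and p="mu n (phi k j)" and p'=U and f="\<lambda>xs. emeasure (A n xs) (E j)" and m=m]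
          pmf_mu_le[of j n k] j k1 unfolding U_def L_def by simp
      finally show ?thesis .
    qed
    have disj: "disjoint_family_on E {..<L}"
      unfolding disjoint_family_on_def E_def using sols_phi_ne[of _ n k] k1 unfolding L_def by auto
    have sum1: "(\<Sum>j<L. emeasure (A n xs) (E j)) \<le> 1" for xs
    proof -
      have "(\<Sum>j<L. emeasure (A n xs) (E j)) = emeasure (A n xs) (\<Union>j<L. E j)"
        using disj by (subst sum_emeasure) auto
      also have "\<dots> \<le> 1" by (rule measure_pmf.emeasure_le_1)
      finally show ?thesis .
    qed
    have "ennreal (real L / 3) = (\<Sum>j<L. ennreal (1/3))"
      by (simp add: ennreal_of_nat_eq_real_of_nat ennreal_mult[symmetric])
    also have "\<dots> \<le> (\<Sum>j<L. ennreal (2^m) * (\<integral>\<^sup>+xs. emeasure (A n xs) (E j) \<partial>measure_pmf (iid_samples m U)))"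
      by (rule sum_mono) (rule step, simp)
    also have "\<dots> = ennreal (2^m) * (\<Sum>j<L. (\<integral>\<^sup>+xs. emeasure (A n xs) (E j) \<partial>measure_pmf (iid_samples m U)))"
      by (simp add: sum_distrib_left)
    also have "\<dots> = ennreal (2^m) * (\<integral>\<^sup>+xs. (\<Sum>j<L. emeasure (A n xs) (E j)) \<partial>measure_pmf (iid_samples m U))"
      by (subst nn_integral_sum) auto
    also have "\<dots> \<le> ennreal (2^m) * (\<integral>\<^sup>+xs. 1 \<partial>measure_pmf (iid_samples m U))"
      by (intro mult_left_mono nn_integral_mono sum1) simp
    also have "\<dots> = ennreal (2^m)" by simp
    finally have "real L / 3 \<le> 2^m" by (subst (asm) ennreal_le_iff) auto
    then show "1/(2*ln 2) * ln (real n) \<le> real m"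
      using arith_part[OF k1 n] unfolding L_def by simp
  qed
qed

end
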